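(* Let $(V,\langle\cdot\,,\cdot\rangle_V)$ be an admissible integral $\mathrm{Cl}_{r,s}$-module and $(U,\langle\cdot\,,\cdot\rangle_U)$ a minimal dimensional admissible integral $\mathrm{Cl}_{1,1}$-module. Then $V\otimes U$ with the scalar product $\langle v\otimes u,v'\otimes u'\rangle=\langle v,v'\rangle_V\langle u,u'\rangle_U$ is (carries the structure of) an admissible integral $\mathrm{Cl}_{r+1,s+1}$-module.
   Context: A scalar product is a real symmetric non-degenerate bilinear form. $\mathrm{Cl}_{p,q}$ is the real Clifford algebra generated by $\mathbb R^{p,q}$ ($\mathbb R^{p+q}$ with quadratic form $x_1^2+\dots+x_p^2-x_{p+1}^2-\dots-x_{p+q}^2$) with relation $z^2=-\langle z,z\rangle\cdot1$; orthonormal generators $z_k$ satisfy $\langle z_k,z_l\rangle=0$ ($k\neq l$), $\langle z_k,z_k\rangle=\pm1$. A $\mathrm{Cl}_{p,q}$-module $V$ with representation $J$ is admissible if it carries a scalar product with $\langle J_zu,v\rangle_V=-\langle u,J_zv\rangle_V$ for all $z,u,v$; it is an admissible integral module if it has a basis $\{v_\alpha\}$ with $\langle v_\alpha,v_\beta\rangle_V=0$ ($\alpha\neq\beta$), $\langle v_\alpha,v_\alpha\rangle_V=\pm1$, and $\langle J_{z_k}v_\alpha,v_\beta\rangle_V\in\{1,-1,0\}$ for all orthonormal generators $z_k$ and all $\alpha,\beta$. Minimal dimensional means of minimal dimension among admissible $\mathrm{Cl}_{1,1}$-modules (this dimension is $4$). *)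

theory Defs
  imports "HOL-Analysis.Analysis"
begin

definition qform :: "nat \<Rightarrow> nat \<Rightarrow> (nat \<Rightarrow> real) \<Rightarrow> real" where
  "qform p q z = (\<Sum>k<p. (z k)^2) - (\<Sum>k\<in>{p..<p+q}. (z k)^2)"

text \<open>J k is the action of the k-th orthonormal generator z_k; J_z = sum_k z_k J_{z_k}.\<close>
definition Jz :: "nat \<Rightarrow> nat \<Rightarrow> (nat \<Rightarrow> 'v \<Rightarrow> 'v) \<Rightarrow> (nat \<Rightarrow> real) \<Rightarrow> 'v \<Rightarrow> 'v::real_vector" where
  "Jz p q J z x = (\<Sum>k<p+q. z k *\<^sub>R J k x)"

definition clifford_module :: "nat \<Rightarrow> nat \<Rightarrow> (nat \<Rightarrow> 'v \<Rightarrow> 'v) \<Rightarrow> 'v::real_vector set \<Rightarrow> bool" where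
  "clifford_module p q J W \<longleftrightarrow> subspace W \<and> (\<exists>S. finite S \<and> W \<subseteq> span S) \<and>
     (\<forall>k<p+q. (\<forall>x\<in>W. J k x \<in> W) \<and>
        (\<forall>x\<in>W. \<forall>y\<in>W. J k (x + y) = J k x + J k y) \<and>
        (\<forall>c. \<forall>x\<in>W. J k (c *\<^sub>R x) = c *\<^sub>R J k x)) \<and>
     (\<forall>z. \<forall>x\<in>W. Jz p q J z (Jz p q J z x) = - (qform p q z) *\<^sub>R x)"

definition scalar_product :: "'v::real_vector set \<Rightarrow> ('v \<Rightarrow> 'v \<Rightarrow> real) \<Rightarrow> bool" where
  "scalar_product W B \<longleftrightarrow>
     (\<forall>x\<in>W. \<forall>y\<in>W. B x y = B y x) \<and>
     (\<forall>x\<in>W. \<forall>y\<in>W. \<forall>z\<in>W. B (x + y) z = B x z + B y z) \<and>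
     (\<forall>c. \<forall>x\<in>W. \<forall>y\<in>W. B (c *\<^sub>R x) y = c * B x y) \<and>
     (\<forall>x\<in>W. (\<forall>y\<in>W. B x y = 0) \<longrightarrow> x = 0)"

definition admissible_module ::
  "nat \<Rightarrow> nat \<Rightarrow> (nat \<Rightarrow> 'v \<Rightarrow> 'v) \<Rightarrow> 'v::real_vector set \<Rightarrow> ('v \<Rightarrow> 'v \<Rightarrow> real) \<Rightarrow> bool" where
  "admissible_module p q J W B \<longleftrightarrow> clifford_module p q J W \<and> scalar_product W B \<and>
     (\<forall>z. \<forall>u\<in>W. \<forall>v\<in>W. B (Jz p q J z u) v = - B u (Jz p q J z v))"

definition admissible_integral_module ::
  "nat \<Rightarrow> nat \<Rightarrow> (nat \<Rightarrow> 'v \<Rightarrow> 'v) \<Rightarrow> 'v::real_vector set \<Rightarrow> ('v \<Rightarrow> 'v \<Rightarrow> real) \<Rightarrow> bool" where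
  "admissible_integral_module p q J W B \<longleftrightarrow> admissible_module p q J W B \<and>
     (\<exists>Bas. Bas \<subseteq> W \<and> independent Bas \<and> span Bas = W \<and>
        (\<forall>a\<in>Bas. \<forall>b\<in>Bas. a \<noteq> b \<longrightarrow> B a b = 0) \<and>
        (\<forall>a\<in>Bas. B a a = 1 \<or> B a a = -1) \<and>
        (\<forall>k<p+q. \<forall>a\<in>Bas. \<forall>b\<in>Bas. B (J k a) b \<in> {1, -1, 0}))"

text \<open>Every admissible
  Cl_{1,1}-module of smaller dimension is isomorphic to one carried by a subspace of
  real^'m, so it suffices to compare against modules on subspaces.\<close>
definition minimal_admissible_Cl11 ::
  "(nat \<Rightarrow> real^'m \<Rightarrow> real^'m) \<Rightarrow> (real^'m \<Rightarrow> real^'m \<Rightarrow> real) \<Rightarrow> bool" where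
  "minimal_admissible_Cl11 J B \<longleftrightarrow> admissible_module 1 1 J UNIV B \<and>
     (\<forall>(W::(real^'m) set) J' B'. admissible_module 1 1 J' W B' \<and> W \<noteq> {0} \<longrightarrow> CARD('m) \<le> dim W)"

definition tensor :: "real^'n \<Rightarrow> real^'m \<Rightarrow> real^('n \<times> 'm)" where
  "tensor v u = (\<chi> ij. v $ fst ij * u $ snd ij)"

end

theory Submission
  imports Defs
begin


lemma tensor_linear1: "linear (\<lambda>v. tensor v u)"
  by (rule linearI) (auto simp: tensor_def vec_eq_iff algebra_simps)
lemma tensor_linear2: "linear (\<lambda>u. tensor v u)"
  by (rule linearI) (auto simp: tensor_def vec_eq_iff algebra_simps)
lemma bilinear_tensor: "bilinear tensor"
  unfolding bilinear_def using tensor_linear1 tensor_linear2 by blast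

lemma axis_tensor: "axis (i,j) (1::real) = tensor (axis i 1) (axis j 1)"
  by (auto simp: tensor_def vec_eq_iff axis_def)

lemma Basis_tensor: "b \<in> (Basis :: (real^('n::finite\<times>'m::finite)) set) \<Longrightarrow> \<exists>i j. b = tensor (axis i 1) (axis j 1)"
  by (auto simp: Basis_vec_def axis_tensor)

lemma subspace_vimage_span: assumes "linear f" shows "subspace {x. f x \<in> span S}"
  unfolding subspace_def using assms
  by (simp add: linear_0 linear_add linear_scale span_zero span_add span_scale)

lemma tensor_span:
  assumes "x \<in> span A" "y \<in> span B"
  shows "tensor x y \<in> span ((\<lambda>(a,b). tensor a b) ` (A \<times> B))"
proof -
  let ?S = "span ((\<lambda>(a,b). tensor a b) ` (A \<times> B))"
  have "\<forall>y\<in>span B. tensor x y \<in> ?S"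
    using assms(1)
  proof (induction rule: span_induct)
    case base
    have "subspace {x. tensor x y \<in> ?S}" for y
      by (rule subspace_vimage_span[OF tensor_linear1])
    then show ?case unfolding subspace_def by auto
  next
    case (step x)
    show ?case
    proof
      fix y assume "y \<in> span B"
      then show "tensor x y \<in> ?S"
      proof (induction rule: span_induct)
        case base
        show ?case by (rule subspace_vimage_span[OF tensor_linear2])
      next
        case (step y)
        then show ?case using \<open>x \<in> A\<close> by (intro span_base) force
      qed
    qed
  qed
  then show ?thesis using assms(2) by blast
qed

lemma Jz_linear: assumes "\<forall>k<p+q. linear (J k)" shows "linear (Jz p q J z)"
proof (rule linearI)
  fix x y show "Jz p q J z (x + y) = Jz p q J z x + Jz p q J z y"
    unfolding Jz_def sum.distrib[symmetric]
    by (rule sum.cong) (use assms in \<open>auto simp: linear_add scaleR_add_right\<close>)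
next
  fix c x show "Jz p q J z (c *\<^sub>R x) = c *\<^sub>R Jz p q J z x"
    unfolding Jz_def scaleR_sum_right
    by (rule sum.cong) (use assms in \<open>auto simp: linear_scale mult.commute\<close>)
qed

lemma Jz11: "Jz 1 1 J z x = z 0 *\<^sub>R J 0 x + z 1 *\<^sub>R J 1 x"
  by (simp add: Jz_def numeral_2_eq_2)

lemma qform11: "qform 1 1 z = (z 0)^2 - (z 1)^2"
  by (simp add: qform_def numeral_2_eq_2)

definition tp :: "(real^'n::finite \<Rightarrow> real^'n) \<Rightarrow> (real^'m::finite \<Rightarrow> real^'m) \<Rightarrow> real^('n\<times>'m) \<Rightarrow> real^('n\<times>'m)" where
  "tp f g w = (\<Sum>q\<in>UNIV. (w $ q) *\<^sub>R tensor (f (axis (fst q) 1)) (g (axis (snd q) 1)))"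

lemma tp_linear: "linear (tp f g)"
  unfolding tp_def
  by (intro linearI) (simp_all add: scaleR_add_left sum.distrib scaleR_sum_right)

lemma lin_expand: fixes f :: "real^'n::finite \<Rightarrow> 'b::real_vector"
  assumes "linear f" shows "f v = (\<Sum>i\<in>UNIV. v$i *\<^sub>R f (axis i 1))"
proof -
  have "f v = f (\<Sum>i\<in>UNIV. v$i *\<^sub>R axis i 1)"
    using basis_expansion[of v] by (simp add: scalar_mult_eq_scaleR)
  also have "\<dots> = (\<Sum>i\<in>UNIV. v$i *\<^sub>R f (axis i 1))"
    using assms by (simp add: linear_sum linear_scale)
  finally show ?thesis .
qed

lemma tp_tensor: assumes "linear f" "linear g"
  shows "tp f g (tensor v u) = tensor (f v) (g u)"
proof -
  have "tensor (f v) (g u) = tensor (\<Sum>i\<in>UNIV. v$i *\<^sub>R f (axis i 1)) (\<Sum>j\<in>UNIV. u$j *\<^sub>R g (axis j 1))"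
    using lin_expand[OF assms(1)] lin_expand[OF assms(2)] by metis
  also have "\<dots> = (\<Sum>j\<in>UNIV. \<Sum>i\<in>UNIV. (u$j * v$i) *\<^sub>R tensor (f (axis i 1)) (g (axis j 1)))"
    by (simp add: linear_sum[OF tensor_linear1] linear_sum[OF tensor_linear2]
        linear_scale[OF tensor_linear1] linear_scale[OF tensor_linear2] scaleR_sum_right)
  also have "\<dots> = (\<Sum>i\<in>UNIV. \<Sum>j\<in>UNIV. (v$i * u$j) *\<^sub>R tensor (f (axis i 1)) (g (axis j 1)))"
    by (rule trans[OF sum.swap]) (simp add: mult.commute)
  also have "\<dots> = tp f g (tensor v u)"
    unfolding tp_def sum.cartesian_product by (simp add: tensor_def case_prod_beta)
  finally show ?thesis by simp
qed

lemma sp_bilinear: assumes "scalar_product UNIV B" shows "bilinear B"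
proof -
  have l: "linear (\<lambda>x. B x y)" for y
    using assms unfolding scalar_product_def by (intro linearI) auto
  have "linear (\<lambda>y. B x y)" for x
  proof -
    have "(\<lambda>y. B x y) = (\<lambda>y. B y x)" using assms unfolding scalar_product_def by auto
    then show ?thesis using l by simp
  qed
  then show ?thesis using l unfolding bilinear_def by blast
qed

lemma orth_coeff:
  fixes B :: "'a::real_vector \<Rightarrow> 'a \<Rightarrow> real"
  assumes lin: "\<And>y. linear (\<lambda>x. B x y)" and fin: "finite S"
    and orth: "\<forall>a\<in>S. \<forall>b\<in>S. a \<noteq> b \<longrightarrow> B a b = 0" and y: "y \<in> S"
  shows "B (\<Sum>v\<in>S. c v *\<^sub>R v) y = c y * B y y"
proof -
  have "B (\<Sum>v\<in>S. c v *\<^sub>R v) y = (\<Sum>v\<in>S. c v * B v y)"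
    using linear_sum[OF lin, of "\<lambda>v. c v *\<^sub>R v" S y] linear_scale[OF lin] by simp
  also have "\<dots> = c y * B y y + (\<Sum>v\<in>S-{y}. c v * B v y)"
    using sum.remove[OF fin y] by simp
  also have "(\<Sum>v\<in>S-{y}. c v * B v y) = 0"
    using orth y by (intro sum.neutral) auto
  finally show ?thesis by simp
qed

lemma orth_nondeg:
  fixes B :: "'a::real_vector \<Rightarrow> 'a \<Rightarrow> real"
  assumes lin: "\<And>y. linear (\<lambda>x. B x y)" and fin: "finite S"
    and orth: "\<forall>a\<in>S. \<forall>b\<in>S. a \<noteq> b \<longrightarrow> B a b = 0" and nz: "\<forall>a\<in>S. B a a \<noteq> 0"
    and x: "x \<in> span S" and z: "\<forall>y\<in>S. B x y = 0"
  shows "x = 0"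
proof -
  obtain c where c: "x = (\<Sum>v\<in>S. c v *\<^sub>R v)" using x span_finite[OF fin] by auto
  have "c y = 0" if "y \<in> S" for y
    using orth_coeff[OF lin fin orth that, of c] z that nz c by auto
  then show ?thesis using c by simp
qed

lemma orth_indep:
  fixes B :: "'a::real_vector \<Rightarrow> 'a \<Rightarrow> real"
  assumes lin: "\<And>y. linear (\<lambda>x. B x y)" and fin: "finite S"
    and orth: "\<forall>a\<in>S. \<forall>b\<in>S. a \<noteq> b \<longrightarrow> B a b = 0" and nz: "\<forall>a\<in>S. B a a \<noteq> 0"
  shows "independent S"
  unfolding dependent_finite[OF fin]
proof clarify
  fix c v assume h: "(\<Sum>v\<in>S. c v *\<^sub>R v) = 0" and v: "v \<in> S" and ne: "c v \<noteq> 0"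
  have "B 0 v = 0" using linear_0[OF lin] by simp
  then show False using orth_coeff[OF lin fin orth v, of c] h nz v ne by auto
qed

lemma span_closed_linear:
  assumes "linear f" "\<forall>e\<in>E. f e \<in> span E" "x \<in> span E"
  shows "f x \<in> span E"
  using assms(3)
proof (induction rule: span_induct)
  case base
  show ?case by (rule subspace_vimage_span[OF assms(1)])
next
  case (step x) then show ?case using assms(2) by auto
qed

lemma U_basic:
  fixes J :: "nat \<Rightarrow> 'a::real_vector \<Rightarrow> 'a"
  assumes "admissible_module 1 1 J UNIV B"
  shows "linear (J 0)" "linear (J 1)" "\<And>x. J 0 (J 0 x) = - x" "\<And>x. J 1 (J 1 x) = x"
    "\<And>x. J 1 (J 0 x) = - J 0 (J 1 x)"
    "\<And>x y. B (J 0 x) y = - B x (J 0 y)" "\<And>x y. B (J 1 x) y = - B x (J 1 y)"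
    "bilinear B" "\<And>x y. B x y = B y x"
proof -
  have cm: "clifford_module 1 1 J UNIV" and sp: "scalar_product UNIV B"
    and sk: "\<And>z u v. B (Jz 1 1 J z u) v = - B u (Jz 1 1 J z v)"
    using assms unfolding admissible_module_def by auto
  have lin: "linear (J k)" if "k < 2" for k
    using cm that unfolding clifford_module_def by (intro linearI) auto
  show l0: "linear (J 0)" and l1: "linear (J 1)" using lin by auto
  have cl: "\<And>z x. Jz 1 1 J z (Jz 1 1 J z x) = - (qform 1 1 z) *\<^sub>R x"
    using cm unfolding clifford_module_def by auto
  show "J 0 (J 0 x) = - x" for x
    using cl[of "\<lambda>k. if k = 0 then 1 else 0" x] unfolding Jz11 qform11 by simp
  moreover show "J 1 (J 1 x) = x" for x
    using cl[of "\<lambda>k. if k = 1 then 1 else 0" x] unfolding Jz11 qform11 by simp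
  moreover have "J 0 (J 0 x + J 1 x) + J 1 (J 0 x + J 1 x) = 0" for x
    using cl[of "\<lambda>k. 1" x] unfolding Jz11 qform11 by simp
  ultimately show "J 1 (J 0 x) = - J 0 (J 1 x)" for x
    using l0 l1 by (simp add: linear_add algebra_simps)
     (metis add.commute add_diff_cancel_left' diff_0 diff_add_cancel eq_neg_iff_add_eq_0)
  show "B (J 0 x) y = - B x (J 0 y)" for x y
    using sk[of "\<lambda>k. if k = 0 then 1 else 0" x y] unfolding Jz11 by simp
  show "B (J 1 x) y = - B x (J 1 y)" for x y
    using sk[of "\<lambda>k. if k = 1 then 1 else 0" x y] unfolding Jz11 by simp
  show "bilinear B" by (rule sp_bilinear[OF sp])
  show "B x y = B y x" for x y using sp unfolding scalar_product_def by auto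
qed

lemma bilinear_compose_l: assumes "bilinear h" "linear f" shows "bilinear (\<lambda>x y. h (f x) y)"
  unfolding bilinear_def
proof (intro conjI allI)
  fix x show "linear (\<lambda>y. h (f x) y)" using assms(1) unfolding bilinear_def by blast
next
  fix y have "linear (\<lambda>x. h x y)" using assms(1) unfolding bilinear_def by blast
  from linear_compose[OF assms(2) this] show "linear (\<lambda>x. h (f x) y)" by (simp add: o_def)
qed
lemma bilinear_compose_r: assumes "bilinear h" "linear f" shows "bilinear (\<lambda>x y. h x (f y))"
  unfolding bilinear_def
proof (intro conjI allI)
  fix y show "linear (\<lambda>x. h x (f y))" using assms(1) unfolding bilinear_def by blast
next
  fix x have "linear (\<lambda>y. h x y)" using assms(1) unfolding bilinear_def by blast
  from linear_compose[OF assms(2) this] show "linear (\<lambda>y. h x (f y))" by (simp add: o_def)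
qed

lemma U_struct:
  fixes J :: "nat \<Rightarrow> real^'m::finite \<Rightarrow> real^'m" and B u
  assumes min: "minimal_admissible_Cl11 J B" and uu: "B u u = 1 \<or> B u u = -1"
  shows "\<exists>A E. linear A \<and> (\<forall>x. A (A x) = x) \<and> (\<forall>x y. B (A x) y = B x (A y)) \<and>
     (\<forall>x. A (J 0 x) = - J 0 (A x)) \<and> (\<forall>x. A (J 1 x) = - J 1 (A x)) \<and>
     finite E \<and> span E = UNIV \<and> (\<forall>a\<in>E. \<forall>b\<in>E. a \<noteq> b \<longrightarrow> B a b = 0) \<and>
     (\<forall>a\<in>E. B a a = 1 \<or> B a a = -1) \<and>
     (\<forall>a\<in>E. \<forall>b\<in>E. B (A a) b \<in> {1,-1,0} \<and> B (J 0 a) b \<in> {1,-1,0} \<and> B (J 1 a) b \<in> {1,-1,0})"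
proof -
  have adm: "admissible_module 1 1 J UNIV B" using min unfolding minimal_admissible_Cl11_def by auto
  note UB = U_basic[OF adm]
  have l0: "linear (J 0)" and l1: "linear (J 1)" and J00: "\<And>x. J 0 (J 0 x) = - x"
    and J11: "\<And>x. J 1 (J 1 x) = x" and J10: "\<And>x. J 1 (J 0 x) = - J 0 (J 1 x)"
    and sk0: "\<And>x y. B (J 0 x) y = - B x (J 0 y)" and sk1: "\<And>x y. B (J 1 x) y = - B x (J 1 y)"
    and bB: "bilinear B" and sym: "\<And>x y. B x y = B y x"
    using UB by blast+
  define J0 where "J0 = J 0"
  define J1 where "J1 = J 1"
  note defs = J0_def[symmetric] J1_def[symmetric]
  note l0 = l0[unfolded defs] and l1 = l1[unfolded defs] and J00 = J00[unfolded defs]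
    and J11 = J11[unfolded defs] and J10 = J10[unfolded defs] and sk0 = sk0[unfolded defs]
    and sk1 = sk1[unfolded defs]
  have neg0: "J0 (- x) = - J0 x" for x using linear_neg[OF l0] .
  have neg1: "J1 (- x) = - J1 x" for x using linear_neg[OF l1] .
  have Bl: "B (- x) y = - B x y" for x y using bilinear_lneg[OF bB] .
  have Br: "B x (- y) = - B x y" for x y using bilinear_rneg[OF bB] .
  define \<epsilon> where "\<epsilon> = B u u"
  have ee: "\<epsilon> * \<epsilon> = 1" using uu unfolding \<epsilon>_def by auto
  define e1 e2 e3 e4 where "e1 = u" and "e2 = J0 u" and "e3 = J1 u" and "e4 = J0 (J1 u)"
  have z0: "B x (J0 x) = 0" for x using sk0[of x x] sym[of "J0 x" x] by simp
  have z1: "B x (J1 x) = 0" for x using sk1[of x x] sym[of "J1 x" x] by simp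
  have n1: "B e1 e1 = \<epsilon>" unfolding e1_def \<epsilon>_def ..
  have n2: "B e2 e2 = \<epsilon>" unfolding e2_def \<epsilon>_def using sk0[of u "J0 u"] by (simp add: J00 Br)
  have n3: "B e3 e3 = - \<epsilon>" unfolding e3_def \<epsilon>_def using sk1[of u "J1 u"] by (simp add: J11)
  have n4: "B e4 e4 = - \<epsilon>" unfolding e4_def \<epsilon>_def using sk0[of "J1 u" "J0 (J1 u)"] sk1[of u "J1 u"]
    by (simp add: J00 J11 Br)
  have o12: "B e1 e2 = 0" unfolding e1_def e2_def by (rule z0)
  have o13: "B e1 e3 = 0" unfolding e1_def e3_def by (rule z1)
  have o34: "B e3 e4 = 0" unfolding e3_def e4_def by (rule z0)
  have o24: "B e2 e4 = 0" unfolding e2_def e4_def using sk0[of u "J0 (J1 u)"] z1[of u] by (simp add: J00 Br)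
  have s1: "B (J0 u) (J1 u) = - B u (J0 (J1 u))" by (rule sk0)
  have s2: "B (J1 u) (J0 u) = B u (J0 (J1 u))" using sk1[of u "J0 u"] by (simp add: J10 Br)
  have o14: "B e1 e4 = 0" unfolding e1_def e4_def using s1 s2 sym[of "J0 u" "J1 u"] by simp
  have o23: "B e2 e3 = 0" unfolding e2_def e3_def using s1 s2 sym[of "J0 u" "J1 u"] by simp
  note tab = n1 n2 n3 n4 o12 o13 o14 o23 o24 o34
    o12[unfolded sym[of e1]] o13[unfolded sym[of e1]] o14[unfolded sym[of e1]]
    o23[unfolded sym[of e2]] o24[unfolded sym[of e2]] o34[unfolded sym[of e3]]
  have j0: "J0 e1 = e2" "J0 e2 = - e1" "J0 e3 = e4" "J0 e4 = - e3"
    unfolding e1_def e2_def e3_def e4_def by (simp_all add: J00)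
  have j1: "J1 e1 = e3" "J1 e2 = - e4" "J1 e3 = e1" "J1 e4 = - e2"
    unfolding e1_def e2_def e3_def e4_def by (simp_all add: J11 J10 neg0)
  define A where "A x = (\<epsilon> * B x e1) *\<^sub>R e2 + (\<epsilon> * B x e2) *\<^sub>R e1 - (\<epsilon> * B x e3) *\<^sub>R e4 - (\<epsilon> * B x e4) *\<^sub>R e3" for x
  have lA: "linear A"
    unfolding A_def
    by (intro linearI) (simp_all add: bilinear_ladd[OF bB] bilinear_lmul[OF bB] algebra_simps)
  have a: "A e1 = e2" "A e2 = e1" "A e3 = e4" "A e4 = e3"
    unfolding A_def by (simp_all add: tab ee)
  define E where "E = {e1, e2, e3, e4}"
  have finE: "finite E" unfolding E_def by simp
  have orth: "\<forall>a\<in>E. \<forall>b\<in>E. a \<noteq> b \<longrightarrow> B a b = 0" unfolding E_def using tab by auto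
  have nrm: "\<forall>a\<in>E. B a a = 1 \<or> B a a = -1" unfolding E_def using tab uu \<epsilon>_def by auto
  have nz: "\<forall>a\<in>E. B a a \<noteq> 0" using nrm by force
  have linB: "linear (\<lambda>x. B x y)" for y using bB unfolding bilinear_def by blast
  have hv: "B a b \<in> {1,-1,0}" if "a\<in>E" "b\<in>E" for a b
    using orth nrm that by (cases "a = b") auto
  have hn: "B (- a) b \<in> {1,-1,0}" if "a\<in>E" "b\<in>E" for a b
    using hv[OF that] by (auto simp: Bl)
  have hpm: "B c b \<in> {1,-1,0}" if "c \<in> E \<or> - c \<in> E" "b\<in>E" for c b
    using that hv hn[of "- c" b] by auto
  have integ: "\<forall>a\<in>E. \<forall>b\<in>E. B (A a) b \<in> {1,-1,0} \<and> B (J0 a) b \<in> {1,-1,0} \<and> B (J1 a) b \<in> {1,-1,0}"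
  proof (intro ballI conjI)
    fix a b assume ab: "a \<in> E" "b \<in> E"
    have "A a \<in> E \<or> - A a \<in> E" "J0 a \<in> E \<or> - J0 a \<in> E" "J1 a \<in> E \<or> - J1 a \<in> E"
      using ab(1) unfolding E_def by (auto simp: a j0 j1)
    then show "B (A a) b \<in> {1,-1,0}" "B (J0 a) b \<in> {1,-1,0}" "B (J1 a) b \<in> {1,-1,0}"
      using hpm ab(2) by blast+
  qed
  have clos: "f x \<in> span E" if "linear f" "\<forall>e\<in>E. f e \<in> {e1,e2,e3,e4,-e1,-e2,-e3,-e4}" "x \<in> span E" for f x
  proof (rule span_closed_linear[OF that(1) _ that(3)])
    show "\<forall>e\<in>E. f e \<in> span E"
    proof
      fix e assume "e \<in> E"
      then have "f e \<in> {e1,e2,e3,e4,-e1,-e2,-e3,-e4}" using that(2) by blast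
      moreover have "\<forall>v\<in>E. v \<in> span E \<and> - v \<in> span E" by (simp add: span_base span_neg)
      ultimately show "f e \<in> span E" unfolding E_def by auto
    qed
  qed
  have cmE: "clifford_module 1 1 J (span E)"
  proof -
    have cm: "clifford_module 1 1 J UNIV" using adm unfolding admissible_module_def by auto
    have "J k x \<in> span E" if "k < 2" "x \<in> span E" for k x
    proof -
      have "k = 0 \<or> k = 1" using that by auto
      moreover have "J0 x \<in> span E" "J1 x \<in> span E"
        using clos[OF l0 _ that(2)] clos[OF l1 _ that(2)] unfolding E_def by (auto simp: j0 j1)
      ultimately show ?thesis unfolding J0_def J1_def by auto
    qed
    moreover have "\<forall>k<1+1. (\<forall>x\<in>UNIV. \<forall>y\<in>UNIV. J k (x + y) = J k x + J k y) \<and>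
        (\<forall>c. \<forall>x\<in>UNIV. J k (c *\<^sub>R x) = c *\<^sub>R J k x)"
      and "\<forall>z. \<forall>x\<in>UNIV. Jz 1 1 J z (Jz 1 1 J z x) = - (qform 1 1 z) *\<^sub>R x"
      using cm unfolding clifford_module_def by blast+
    ultimately show ?thesis unfolding clifford_module_def
      by (intro conjI exI[of _ E] finE subspace_span order_refl) auto
  qed
  have spE: "scalar_product (span E) B"
  proof -
    have sp: "scalar_product UNIV B" using adm unfolding admissible_module_def by auto
    have "x = 0" if "x \<in> span E" "\<forall>y\<in>span E. B x y = 0" for x
      using orth_nondeg[OF linB finE orth nz that(1)] that(2) span_base by blast
    moreover have "\<forall>x\<in>UNIV. \<forall>y\<in>UNIV. B x y = B y x"
      "\<forall>x\<in>UNIV. \<forall>y\<in>UNIV. \<forall>z\<in>UNIV. B (x + y) z = B x z + B y z"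
      "\<forall>c. \<forall>x\<in>UNIV. \<forall>y\<in>UNIV. B (c *\<^sub>R x) y = c * B x y"
      using sp unfolding scalar_product_def by blast+
    ultimately show ?thesis unfolding scalar_product_def by simp
  qed
  have admE: "admissible_module 1 1 J (span E) B"
    using adm cmE spE unfolding admissible_module_def by blast
  have uE: "u \<in> span E" unfolding E_def e1_def by (intro span_base) simp
  have u0: "u \<noteq> 0" using uu bilinear_lzero[OF bB, of u] by auto
  have "span E \<noteq> {0}" using uE u0 by blast
  then have "CARD('m) \<le> dim (span E)" using min admE unfolding minimal_admissible_Cl11_def by blast
  moreover have "dim (span E) \<le> CARD('m)" using dim_subset_UNIV[of "span E"] by simp
  ultimately have "dim (span E) = DIM(real^'m)" by simp
  then have spanE: "span E = UNIV" using dim_eq_full[of "span E"] by (simp add: span_span)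
  have xin: "x \<in> span E" for x using spanE by simp
  have AA: "A (A x) = x" for x
    by (rule linear_eq_on_span[OF linear_compose[OF lA lA, unfolded o_def] linear_id[unfolded id_def] _ xin])
      (auto simp: E_def a)
  have AJ0: "A (J0 x) = - J0 (A x)" for x
    by (rule linear_eq_on_span[OF linear_compose[OF l0 lA, unfolded o_def]
        linear_compose_neg[OF linear_compose[OF lA l0, unfolded o_def]] _ xin])
     (auto simp: E_def a j0 linear_neg[OF lA])
  have AJ1: "A (J1 x) = - J1 (A x)" for x
    by (rule linear_eq_on_span[OF linear_compose[OF l1 lA, unfolded o_def]
        linear_compose_neg[OF linear_compose[OF lA l1, unfolded o_def]] _ xin])
     (auto simp: E_def a j1 linear_neg[OF lA])
  have Asym: "B (A x) y = B x (A y)" for x y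
  proof -
    have fgE: "\<And>x y. x\<in>E \<Longrightarrow> y\<in>E \<Longrightarrow> B (A x) y = B x (A y)" by (auto simp: E_def a tab)
    have su: "UNIV \<subseteq> span E" by (simp add: spanE)
    show ?thesis
      by (rule bilinear_eq[OF bilinear_compose_l[OF bB lA] bilinear_compose_r[OF bB lA] su su UNIV_I UNIV_I fgE])
  qed
  show ?thesis
    using lA AA Asym AJ0 AJ1 finE spanE orth nrm integ unfolding J0_def J1_def by blast
qed

lemma bilinear_neg: assumes "bilinear h" shows "bilinear (\<lambda>x y. - h x y)"
  unfolding bilinear_def
proof (intro conjI allI)
  fix x have "linear (\<lambda>y. h x y)" using assms unfolding bilinear_def by blast
  then show "linear (\<lambda>y. - h x y)" by (rule linear_compose_neg)
next
  fix y have "linear (\<lambda>x. h x y)" using assms unfolding bilinear_def by blast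
  then show "linear (\<lambda>x. - h x y)" by (rule linear_compose_neg)
qed

lemma bilinear_swap': "bilinear h \<Longrightarrow> bilinear (\<lambda>x y. h y x)"
  unfolding bilinear_def by blast

lemma qform_split:
  "qform (r+1) (s+1) z = qform r s (\<lambda>i. z (Suc i)) + qform 1 1 (\<lambda>i. if i = 0 then z 0 else z (Suc (r+s)))"
proof -
  have a: "(\<Sum>k<r+1. (z k)^2) = (z 0)^2 + (\<Sum>k<r. (z (Suc k))^2)"
    using sum.lessThan_Suc_shift[of "\<lambda>k. (z k)^2" r] by simp
  have b: "(\<Sum>k\<in>{r+1..<r+1+(s+1)}. (z k)^2) = (\<Sum>k\<in>{r..<r+s}. (z (Suc k))^2) + (z (Suc (r+s)))^2"
  proof -
    have "{r+1..<r+1+(s+1)} = {Suc r..<Suc (Suc (r+s))}" by auto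
    then have "(\<Sum>k\<in>{r+1..<r+1+(s+1)}. (z k)^2) = (\<Sum>k\<in>{Suc r..<Suc (r+s)}. (z k)^2) + (z (Suc (r+s)))^2"
      by (simp add: sum.atLeastLessThan_Suc)
    also have "(\<Sum>k\<in>{Suc r..<Suc (r+s)}. (z k)^2) = (\<Sum>k\<in>{r..<r+s}. (z (Suc k))^2)"
      by (rule sum.shift_bounds_Suc_ivl)
    finally show ?thesis .
  qed
  show ?thesis unfolding qform_def using a b by (simp add: numeral_2_eq_2)
qed



theorem theorem7p7:
  fixes r s :: nat
    and JV :: "nat \<Rightarrow> real^'n \<Rightarrow> real^'n" and BV :: "real^'n \<Rightarrow> real^'n \<Rightarrow> real"
    and JU :: "nat \<Rightarrow> real^'m \<Rightarrow> real^'m" and BU :: "real^'m \<Rightarrow> real^'m \<Rightarrow> real"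
    and T :: "real^('n \<times> 'm) \<Rightarrow> real^('n \<times> 'm) \<Rightarrow> real"
  assumes "admissible_integral_module r s JV UNIV BV"
    and "admissible_integral_module 1 1 JU UNIV BU"
    and "minimal_admissible_Cl11 JU BU"
    and "bilinear T"
    and "\<forall>v u v' u'. T (tensor v u) (tensor v' u') = BV v v' * BU u u'"
  shows "\<exists>J. admissible_integral_module (r + 1) (s + 1) J UNIV T"
proof -
  note TT = assms(5)[rule_format]
  have bT: "bilinear T" by fact
  have admV: "admissible_module r s JV UNIV BV" using assms(1) unfolding admissible_integral_module_def by blast
  obtain BasV where BasV: "independent BasV" "span BasV = UNIV"
      "\<forall>a\<in>BasV. \<forall>b\<in>BasV. a \<noteq> b \<longrightarrow> BV a b = 0" "\<forall>a\<in>BasV. BV a a = 1 \<or> BV a a = -1"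
      "\<forall>k<r+s. \<forall>a\<in>BasV. \<forall>b\<in>BasV. BV (JV k a) b \<in> {1, -1, 0}"
    using assms(1) unfolding admissible_integral_module_def by blast
  have cmV: "clifford_module r s JV UNIV" and spV: "scalar_product UNIV BV"
    and skV: "\<And>z x y. BV (Jz r s JV z x) y = - BV x (Jz r s JV z y)"
    using admV unfolding admissible_module_def by auto
  have linV: "\<forall>k<r+s. linear (JV k)"
  proof (intro allI impI)
    fix k assume "k < r + s"
    then show "linear (JV k)" using cmV unfolding clifford_module_def by (intro linearI) auto
  qed
  have clV: "\<And>z x. Jz r s JV z (Jz r s JV z x) = - (qform r s z) *\<^sub>R x"
    using cmV unfolding clifford_module_def by auto
  have bV: "bilinear BV" by (rule sp_bilinear[OF spV])
  have symV: "\<And>x y. BV x y = BV y x" using spV unfolding scalar_product_def by auto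
  have finV: "finite BasV" using BasV(1) by (rule finiteI_independent)
  have hvV: "BV a b \<in> {1,-1,0}" if "a\<in>BasV" "b\<in>BasV" for a b
  proof (cases "a = b")
    case True then show ?thesis using BasV(4) that by force
  next
    case False then show ?thesis using BasV(3) that by force
  qed
  have admU: "admissible_module 1 1 JU UNIV BU" using assms(2) unfolding admissible_integral_module_def by blast
  obtain BasU where BasU: "span BasU = UNIV" "\<forall>a\<in>BasU. BU a a = 1 \<or> BU a a = -1"
    using assms(2) unfolding admissible_integral_module_def by blast
  have "BasU \<noteq> {}"
  proof
    assume "BasU = {}"
    then have "(UNIV :: (real^'m) set) = {0}" using BasU(1) by simp
    moreover have "axis undefined (1::real) \<noteq> (0 :: real^'m)" by (simp add: axis_eq_0_iff)
    ultimately show False by blast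
  qed
  then obtain u0 where "u0 \<in> BasU" by blast
  then have u0: "BU u0 u0 = 1 \<or> BU u0 u0 = -1" using BasU(2) by blast
  obtain A E where lA: "linear A" and AA: "\<And>x. A (A x) = x" and Asym: "\<And>x y. BU (A x) y = BU x (A y)"
    and AJ0: "\<And>x. A (JU 0 x) = - JU 0 (A x)" and AJ1: "\<And>x. A (JU 1 x) = - JU 1 (A x)"
    and finE: "finite E" and spanE: "span E = UNIV"
    and orthE: "\<forall>a\<in>E. \<forall>b\<in>E. a \<noteq> b \<longrightarrow> BU a b = 0" and nrmE: "\<forall>a\<in>E. BU a a = 1 \<or> BU a a = -1"
    and intE: "\<forall>a\<in>E. \<forall>b\<in>E. BU (A a) b \<in> {1,-1,0} \<and> BU (JU 0 a) b \<in> {1,-1,0} \<and> BU (JU 1 a) b \<in> {1,-1,0}"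
    using U_struct[OF assms(3) u0] by metis
  note UB = U_basic[OF admU]
  have l0: "linear (JU 0)" and l1: "linear (JU 1)" and bU: "bilinear BU" and symU: "\<And>x y. BU x y = BU y x"
    using UB by blast+
  have l1s: "linear (JU (Suc 0))" using l1 by simp
  have linU: "\<forall>k<1+1. linear (JU k)" using l0 l1 by (auto simp: less_Suc_eq)
  have clU: "\<And>z x. Jz 1 1 JU z (Jz 1 1 JU z x) = - (qform 1 1 z) *\<^sub>R x"
    using admU unfolding admissible_module_def clifford_module_def by auto
  have clUs: "\<And>z x. Jz (Suc 0) (Suc 0) JU z (Jz (Suc 0) (Suc 0) JU z x) = - (qform (Suc 0) (Suc 0) z) *\<^sub>R x"
    using clU by simp
  have skU: "\<And>z x y. BU (Jz 1 1 JU z x) y = - BU x (Jz 1 1 JU z y)"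
    using admU unfolding admissible_module_def by auto
  have skUs: "\<And>z x y. BU (Jz (Suc 0) (Suc 0) JU z x) y = - BU x (Jz (Suc 0) (Suc 0) JU z y)"
    using skU by simp
  have AJz: "A (Jz 1 1 JU z x) = - Jz 1 1 JU z (A x)" for z x
    unfolding Jz11 using AJ0 AJ1 by (simp add: linear_add[OF lA] linear_scale[OF lA])
  define J where "J k = (if k = 0 then tp id (JU 0) else if k \<le> r + s then tp (JV (k - 1)) A else tp id (JU 1))" for k
  have linJ: "linear (J k)" for k unfolding J_def by (simp add: tp_linear)
  have linJz: "linear (Jz (r+1) (s+1) J z)" for z by (rule Jz_linear) (simp add: linJ)
  define zv where "zv z = (\<lambda>i::nat. z (Suc i))" for z :: "nat \<Rightarrow> real"
  define zu where "zu z = (\<lambda>i::nat. if i = 0 then z 0 else z (Suc (r+s)))" for z :: "nat \<Rightarrow> real"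
  have Jzt: "Jz (r+1) (s+1) J z (tensor v u) =
      tensor (Jz r s JV (zv z) v) (A u) + tensor v (Jz 1 1 JU (zu z) u)" for z v u
  proof -
    have "Jz (r+1) (s+1) J z (tensor v u) = (\<Sum>k<Suc (Suc (r+s)). z k *\<^sub>R J k (tensor v u))"
      unfolding Jz_def by simp
    also have "\<dots> = z 0 *\<^sub>R J 0 (tensor v u) + (\<Sum>i<r+s. z (Suc i) *\<^sub>R J (Suc i) (tensor v u))
        + z (Suc (r+s)) *\<^sub>R J (Suc (r+s)) (tensor v u)"
      by (simp only: sum.lessThan_Suc[of _ "Suc (r+s)"] sum.lessThan_Suc_shift[of _ "r+s"])
    also have "(\<Sum>i<r+s. z (Suc i) *\<^sub>R J (Suc i) (tensor v u)) = (\<Sum>i<r+s. z (Suc i) *\<^sub>R tensor (JV i v) (A u))"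
      by (rule sum.cong) (auto simp: J_def tp_tensor linV lA)
    also have "J 0 (tensor v u) = tensor v (JU 0 u)" unfolding J_def by (simp add: tp_tensor[OF linear_id l0])
    also have "J (Suc (r+s)) (tensor v u) = tensor v (JU 1 u)" unfolding J_def by (simp add: tp_tensor[OF linear_id l1s])
    also have "(\<Sum>i<r+s. z (Suc i) *\<^sub>R tensor (JV i v) (A u)) = tensor (Jz r s JV (zv z) v) (A u)"
      unfolding Jz_def zv_def
      by (simp add: linear_sum[OF tensor_linear1] linear_scale[OF tensor_linear1])
    also have "tensor v (Jz 1 1 JU (zu z) u) = z 0 *\<^sub>R tensor v (JU 0 u) + z (Suc (r+s)) *\<^sub>R tensor v (JU 1 u)"
      unfolding Jz11 zu_def by (simp add: linear_add[OF tensor_linear2] linear_scale[OF tensor_linear2])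
    ultimately show ?thesis by simp
  qed
  have qsplit: "qform (r+1) (s+1) z = qform r s (zv z) + qform 1 1 (zu z)" for z
    unfolding zv_def zu_def by (rule qform_split)
  have linJzV: "linear (Jz r s JV z)" for z by (rule Jz_linear[OF linV])
  have linJzU: "linear (Jz 1 1 JU z)" for z by (rule Jz_linear[OF linU])
  have clt: "Jz (r+1) (s+1) J z (Jz (r+1) (s+1) J z (tensor v u)) = - qform (r+1) (s+1) z *\<^sub>R tensor v u" for z v u
  proof -
    let ?jv = "Jz r s JV (zv z)" and ?ju = "Jz 1 1 JU (zu z)"
    have "Jz (r+1) (s+1) J z (Jz (r+1) (s+1) J z (tensor v u))
        = tensor (?jv (?jv v)) (A (A u)) + tensor (?jv v) (?ju (A u))
          + (tensor (?jv v) (A (?ju u)) + tensor v (?ju (?ju u)))"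
      unfolding Jzt linear_add[OF linJz] ..
    also have "\<dots> = tensor (?jv (?jv v)) (A (A u)) + tensor v (?ju (?ju u))"
    proof -
      have x1: "tensor (?jv v) (?ju (A u)) = - tensor (?jv v) (A (?ju u))"
        using AJz[of "zu z" u] by (simp add: linear_neg[OF tensor_linear2])
      show ?thesis unfolding x1 by simp
    qed
    also have "\<dots> = tensor (- qform r s (zv z) *\<^sub>R v) u + tensor v (- qform 1 1 (zu z) *\<^sub>R u)"
      unfolding AA clV clU ..
    also have "\<dots> = - qform (r+1) (s+1) z *\<^sub>R tensor v u"
      unfolding qsplit by (simp add: linear_scale[OF tensor_linear1] linear_scale[OF tensor_linear2] linear_neg[OF tensor_linear1] linear_neg[OF tensor_linear2] algebra_simps)
    finally show ?thesis .
  qed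
  have cl: "Jz (r+1) (s+1) J z (Jz (r+1) (s+1) J z x) = - qform (r+1) (s+1) z *\<^sub>R x" for z x
  proof -
    have "(\<lambda>x. Jz (r+1) (s+1) J z (Jz (r+1) (s+1) J z x)) = (\<lambda>x. - qform (r+1) (s+1) z *\<^sub>R x)"
    proof (rule linear_eq_stdbasis)
      show "linear (\<lambda>x. Jz (r+1) (s+1) J z (Jz (r+1) (s+1) J z x))"
        using linear_compose[OF linJz linJz] by (simp add: o_def)
      show "linear (\<lambda>x. - qform (r+1) (s+1) z *\<^sub>R x)" by (rule linear_scale_self)
      fix b :: "real^('n\<times>'m)" assume "b \<in> Basis"
      then obtain i j where "b = tensor (axis i 1) (axis j 1)" using Basis_tensor by blast
      then show "Jz (r+1) (s+1) J z (Jz (r+1) (s+1) J z b) = - qform (r+1) (s+1) z *\<^sub>R b" using clt by simp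
    qed
    then show ?thesis by metis
  qed
  have skt: "T (Jz (r+1) (s+1) J z (tensor v u)) (tensor v' u') = - T (tensor v u) (Jz (r+1) (s+1) J z (tensor v' u'))" for z v u v' u'
    unfolding Jzt bilinear_ladd[OF bT] bilinear_radd[OF bT] TT
    by (simp add: skV skUs Asym algebra_simps)
  have sk: "T (Jz (r+1) (s+1) J z x) y = - T x (Jz (r+1) (s+1) J z y)" for z x y
  proof -
    have "(\<lambda>x y. T (Jz (r+1) (s+1) J z x) y) = (\<lambda>x y. - T x (Jz (r+1) (s+1) J z y))"
    proof (rule bilinear_eq_stdbasis)
      show "bilinear (\<lambda>x y. T (Jz (r+1) (s+1) J z x) y)" by (rule bilinear_compose_l[OF bT linJz])
      show "bilinear (\<lambda>x y. - T x (Jz (r+1) (s+1) J z y))" by (rule bilinear_neg[OF bilinear_compose_r[OF bT linJz]])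
      fix a b :: "real^('n\<times>'m)" assume "a \<in> Basis" "b \<in> Basis"
      then show "T (Jz (r+1) (s+1) J z a) b = - T a (Jz (r+1) (s+1) J z b)"
        using Basis_tensor skt by metis
    qed
    then show ?thesis by metis
  qed
  have symT: "T x y = T y x" for x y
  proof -
    have "T = (\<lambda>x y. T y x)"
    proof (rule bilinear_eq_stdbasis[OF bT bilinear_swap'[OF bT]])
      fix a b :: "real^('n\<times>'m)" assume "a \<in> Basis" "b \<in> Basis"
      then show "T a b = T b a" using Basis_tensor TT symV symU by (metis mult.commute)
    qed
    then show ?thesis by metis
  qed
  define Bas where "Bas = (\<lambda>(a,b). tensor a b) ` (BasV \<times> E)"
  have finB: "finite Bas" unfolding Bas_def using finV finE by simp
  have orthB: "\<forall>p\<in>Bas. \<forall>q\<in>Bas. p \<noteq> q \<longrightarrow> T p q = 0"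
    unfolding Bas_def using BasV(3) orthE by (auto simp: TT) metis
  have nrmB: "\<forall>p\<in>Bas. T p p = 1 \<or> T p p = -1"
    unfolding Bas_def using BasV(4) nrmE by (fastforce simp: TT)
  have nzB: "\<forall>p\<in>Bas. T p p \<noteq> 0" using nrmB by force
  have linT: "linear (\<lambda>x. T x y)" for y using bT unfolding bilinear_def by blast
  have spanB: "span Bas = UNIV"
  proof -
    have "Basis \<subseteq> span Bas"
    proof
      fix b :: "real^('n\<times>'m)" assume "b \<in> Basis"
      then obtain i j where "b = tensor (axis i 1) (axis j 1)" using Basis_tensor by blast
      then show "b \<in> span Bas" unfolding Bas_def using tensor_span BasV(2) spanE by blast
    qed
    then have "span Basis \<subseteq> span Bas" by (metis span_mono span_span)
    then show ?thesis by (simp add: span_Basis top_le)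
  qed
  have indB: "independent Bas" by (rule orth_indep[OF linT finB orthB nzB])
  have intB: "\<forall>k<r+1+(s+1). \<forall>p\<in>Bas. \<forall>q\<in>Bas. T (J k p) q \<in> {1, -1, 0}"
  proof (intro allI impI ballI)
    fix k p q assume k: "k < r+1+(s+1)" and p: "p \<in> Bas" and q: "q \<in> Bas"
    obtain a b where ab: "a \<in> BasV" "b \<in> E" "p = tensor a b" using p unfolding Bas_def by auto
    obtain a' b' where ab': "a' \<in> BasV" "b' \<in> E" "q = tensor a' b'" using q unfolding Bas_def by auto
    have prod: "x * y \<in> {1,-1,0}" if "x \<in> {1,-1,0}" "y \<in> {1,-1,0}" for x y :: real
      using that by auto
    have hv: "BV a a' \<in> {1,-1,0}" using hvV ab ab' by blast
    have i0: "BU (JU 0 b) b' \<in> {1,-1,0}" and iA: "BU (A b) b' \<in> {1,-1,0}"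
      and i1: "BU (JU 1 b) b' \<in> {1,-1,0}" using intE ab ab' by blast+
    show "T (J k p) q \<in> {1, -1, 0}"
    proof (cases "k = 0")
      case True
      then have "T (J k p) q = BV a a' * BU (JU 0 b) b'"
        unfolding ab(3) ab'(3) J_def by (simp add: tp_tensor[OF linear_id l0] TT)
      then show ?thesis using prod[OF hv i0] by simp
    next
      case False
      show ?thesis
      proof (cases "k \<le> r + s")
        case True
        then have kk: "k - 1 < r + s" using False by simp
        then have "T (J k p) q = BV (JV (k - 1) a) a' * BU (A b) b'"
          using False True unfolding ab(3) ab'(3) J_def by (simp add: tp_tensor linV lA TT)
        moreover have "BV (JV (k - 1) a) a' \<in> {1,-1,0}" using BasV(5) kk ab ab' by blast
        ultimately show ?thesis using prod iA by simp
      next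
        case False2: False
        have "J k p = tensor a (JU 1 b)"
          using False False2 unfolding ab(3) J_def using tp_tensor[OF linear_id l1] by simp
        then have "T (J k p) q = BV a a' * BU (JU 1 b) b'"
          unfolding ab'(3) by (simp only: TT)
        then show ?thesis using prod[OF hv i1] by simp
      qed
    qed
  qed
  have cmT: "clifford_module (r+1) (s+1) J UNIV"
    unfolding clifford_module_def
    using linJ cl by (auto intro!: exI[of _ Basis] simp: linear_add linear_scale span_Basis)
  have nondeg: "x = 0" if "\<forall>y\<in>UNIV. T x y = 0" for x
    using orth_nondeg[OF linT finB orthB nzB, of x] spanB that by blast
  have spT: "scalar_product UNIV T"
    unfolding scalar_product_def
  proof (intro conjI ballI allI impI)
    show "T x y = T y x" for x y by (rule symT)
    show "T (x + y) z = T x z + T y z" for x y z by (rule bilinear_ladd[OF bT])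
    show "T (c *\<^sub>R x) y = c * T x y" for c x y using bilinear_lmul[OF bT] by simp
    show "x = 0" if "x \<in> UNIV" "\<forall>y\<in>UNIV. T x y = 0" for x using nondeg that(2) .
  qed
  have "admissible_integral_module (r + 1) (s + 1) J UNIV T"
    unfolding admissible_integral_module_def admissible_module_def
    using cmT spT sk indB spanB orthB nrmB intB by blast
  then show ?thesis by blast
qed

end
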